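(* Let $N\ge 3$ be an integer and $a>0$ real. Let $H=H^{(N)}(a)$ be the real $N\times N$ tridiagonal matrix with $H_{nn}=a+2n-1$, $H_{n,n+1}=-n$, $H_{n+1,n}=-(a+n)$, all other entries zero, and write $D_n(a)=\prod_{j=1}^{n-1}(a+j)$. Then there exists a real symmetric pentadiagonal $N\times N$ matrix $\mathcal P_2=\mathcal P_2^{(N)}(a)$ with $H^\dagger\mathcal P_2=\mathcal P_2H$ whose entries are $(\mathcal P_2)_{11}=(\mathcal P_2)_{12}=0$, $(\mathcal P_2)_{13}=1$, $$(\mathcal P_2)_{nn}=\frac{(n-1)\,(n-1)!\,(a+3n-4)}{D_n(a)}\quad(n=2,\dots,N-1),$$ $$(\mathcal P_2)_{n,n+1}=-\frac{2(n-1)\,n!}{D_n(a)}\quad(n=2,\dots,N-1),\qquad (\mathcal P_2)_{n,n+2}=\frac{(n+1)!}{2D_n(a)}\quad(n=2,\dots,N-2),$$ (the remaining entry $(\mathcal P_2)_{NN}$ being some real number depending on $N$ and $a$). Consequently, with $\Theta_0$ and $\mathcal P_1$ as in the context, for all real $\alpha,\beta$ the pentadiagonal matrix $\Theta_2=\Theta_0+\alpha\mathcal P_1+\beta\mathcal P_2$ satisfies $H^\dagger\Theta_2=\Theta_2H$, and it is a positive definite metric for $H$ whenever $|\alpha|,|\beta|$ are sufficiently small.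
   Context: $H^\dagger$ is the conjugate transpose. A metric for $H$ is a positive definite Hermitian matrix $\Theta$ with $H^\dagger\Theta=\Theta H$. $\Theta_0$ is the diagonal matrix with $(\Theta_0)_{nn}=(n-1)!/D_n(a)$; $\mathcal P_1$ is the real symmetric tridiagonal matrix with $(\mathcal P_1)_{11}=0$, $(\mathcal P_1)_{nn}=-2(n-1)(n-1)!/D_n(a)$ for $n\ge2$, and $(\mathcal P_1)_{n,n+1}=(\mathcal P_1)_{n+1,n}=n!/D_n(a)$; both satisfy $H^\dagger X=XH$. Symmetric entries are understood: $(\mathcal P_2)_{ji}=(\mathcal P_2)_{ij}$. *)

theory Defs
  imports Complex_Main "Jordan_Normal_Form.Matrix"
begin

text \<open>JNF indices are 0-based;
  the paper's 1-based index n corresponds to JNF index n-1.  All definitions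
  below are stated in terms of the paper's 1-based indices n = i+1, m = j+1.\<close>

definition D :: "nat \<Rightarrow> real \<Rightarrow> real" where
  "D n a = (\<Prod>j = 1..n - 1. a + real j)"

definition Hmat :: "nat \<Rightarrow> real \<Rightarrow> real mat" where
  "Hmat N a = mat N N (\<lambda>(i, j). let n = i + 1; m = j + 1 in
     if m = n then a + 2 * real n - 1
     else if m = n + 1 then - real n
     else if n = m + 1 then - (a + real m)
     else 0)"

definition Theta0 :: "nat \<Rightarrow> real \<Rightarrow> real mat" where
  "Theta0 N a = mat N N (\<lambda>(i, j). let n = i + 1 in
     if j = i then fact (n - 1) / D n a else 0)"

definition P1 :: "nat \<Rightarrow> real \<Rightarrow> real mat" where
  "P1 N a = mat N N (\<lambda>(i, j). let n = i + 1; m = j + 1 in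
     if m = n then (if n = 1 then 0 else - 2 * real (n - 1) * fact (n - 1) / D n a)
     else if m = n + 1 then fact n / D n a
     else if n = m + 1 then fact m / D m a
     else 0)"

text \<open>Positive definite Hermitian matrix; for real matrices the conjugate
  transpose is the transpose.\<close>
definition pos_def_hermitian :: "nat \<Rightarrow> real mat \<Rightarrow> bool" where
  "pos_def_hermitian N T \<longleftrightarrow> T \<in> carrier_mat N N \<and> transpose_mat T = T \<and>
     (\<forall>v \<in> carrier_vec N. v \<noteq> 0\<^sub>v N \<longrightarrow> 0 < v \<bullet> (T *\<^sub>v v))"

definition is_metric :: "nat \<Rightarrow> real mat \<Rightarrow> real mat \<Rightarrow> bool" where
  "is_metric N H T \<longleftrightarrow> pos_def_hermitian N T \<and> transpose_mat H * T = T * H"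

end

theory Submission
  imports Defs
begin


definition MH :: "nat \<Rightarrow> real \<Rightarrow> (nat\<Rightarrow>nat\<Rightarrow>real) \<Rightarrow> nat \<Rightarrow> nat \<Rightarrow> real" where
 "MH N a g i j = (if 0<j then g i (j-1) * (- real j) else 0) + g i j * (a + 2*real j + 1)
    + (if j+1<N then g i (j+1) * (-(a+real j+1)) else 0)"

lemma Hmat_carrier: "Hmat N a \<in> carrier_mat N N" by (simp add: Hmat_def)

lemma mult_H:
  assumes "i<N" "j<N"
  shows "(mat N N (\<lambda>(i,j). g i j) * Hmat N a) $$ (i,j) = MH N a g i j"
proof -
  have "(mat N N (\<lambda>(i,j). g i j) * Hmat N a) $$ (i,j) =
     (\<Sum>k\<in>{0..<N}. g i k * Hmat N a $$ (k,j))"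
    using assms by (simp add: Hmat_def scalar_prod_def)
  also have "\<dots> = (\<Sum>k\<in>{0..<N}. (if k = j - 1 \<and> 0 < j then g i k * (- real j) else 0)
      + (if k = j then g i j * (a + 2*real j + 1) else 0)
      + (if k = j+1 then g i k * (-(a+real j+1)) else 0))"
    apply (rule sum.cong, simp)
    using assms by (auto simp: Hmat_def Let_def)
  also have "\<dots> = MH N a g i j"
    using assms unfolding MH_def sum.distrib by (auto simp: sum.delta')
  finally show ?thesis .
qed

lemma intertwine:
  assumes M: "M = mat N N (\<lambda>(i,j). g i j)" and sym: "\<And>i j. g i j = g j i"
    and c: "\<And>i j. i<N \<Longrightarrow> j<N \<Longrightarrow> MH N a g i j = MH N a g j i"
  shows "transpose_mat (Hmat N a) * M = M * Hmat N a"
proof -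
  have MC: "M \<in> carrier_mat N N" using M by simp
  have tM: "transpose_mat M = M" using M sym by (intro eq_matI) auto
  have "transpose_mat (Hmat N a) * M = transpose_mat (Hmat N a) * transpose_mat M" using tM by simp
  also have "\<dots> = transpose_mat (M * Hmat N a)"
    using transpose_mult[OF MC Hmat_carrier] by simp
  also have "\<dots> = M * Hmat N a"
  proof (rule eq_matI)
    fix i j assume "i < dim_row (M * Hmat N a)" "j < dim_col (M * Hmat N a)"
    then have ij: "i<N" "j<N" using MC Hmat_carrier[of N a] by auto
    show "transpose_mat (M * Hmat N a) $$ (i, j) = (M * Hmat N a) $$ (i, j)"
    proof -
      have "transpose_mat (M * Hmat N a) $$ (i, j) = (M * Hmat N a) $$ (j, i)"
        using ij MC Hmat_carrier[of N a] by (intro index_transpose_mat) auto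
      also have "\<dots> = MH N a g j i" using ij by (simp only: M mult_H)
      also have "\<dots> = MH N a g i j" using c ij by simp
      also have "\<dots> = (M * Hmat N a) $$ (i, j)" using ij by (simp only: M mult_H)
      finally show ?thesis .
    qed
  qed (use MC Hmat_carrier[of N a] in auto)
  finally show ?thesis .
qed


lemma D_SS: "D (Suc (Suc k)) a = (a + real k + 1) * D (Suc k) a"
  by (simp add: D_def prod.cl_ivl_Suc algebra_simps)
lemma D_1[simp]: "D (Suc 0) a = 1" by (simp add: D_def)
lemma D_0[simp]: "D 0 a = 1" by (simp add: D_def)
lemma D_pos: "a > 0 \<Longrightarrow> D n a > 0" unfolding D_def by (rule prod_pos) auto

lemma MH_cases:
  assumes sym: "\<And>i j. g i j = g j i"
   and band: "\<And>i j. i+2<j \<Longrightarrow> g i j = 0"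
   and c1: "\<And>i. i+1<N \<Longrightarrow> MH N a g i (i+1) = MH N a g (i+1) i"
   and c2: "\<And>i. i+2<N \<Longrightarrow> MH N a g i (i+2) = MH N a g (i+2) i"
   and c3: "\<And>i. i+3<N \<Longrightarrow> MH N a g i (i+3) = MH N a g (i+3) i"
   and ij: "i<N" "j<N"
  shows "MH N a g i j = MH N a g j i"
proof -
  have band': "\<And>i j. j+2<i \<Longrightarrow> g i j = 0" using band sym by metis
  have main: "MH N a g i j = MH N a g j i" if "i \<le> j" "i<N" "j<N" for i j
  proof -
    consider "j = i" | "j = i+1" | "j=i+2" | "j=i+3" | "i+4 \<le> j" using \<open>i\<le>j\<close> by linarith
    then show ?thesis
    proof cases
      case 5
      then show ?thesis unfolding MH_def using band band' by auto
    qed (use that c1 c2 c3 in auto)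
  qed
  show ?thesis
  proof (cases "i \<le> j")
    case True then show ?thesis using main ij by auto
  next
    case False then show ?thesis using main[of j i] ij by auto
  qed
qed



lemma MH_0: "MH N a g i 0 = g i 0 * (a + 1) + (if 1<N then g i 1 * (-(a+1)) else 0)"
  by (simp add: MH_def)
lemma MH_Suc: "MH N a g i (Suc j) = g i j * (- (real j + 1)) + g i (Suc j) * (a + 2*real j + 3)
    + (if j+2<N then g i (j+2) * (-(a+real j+2)) else 0)"
  by (simp add: MH_def algebra_simps)

definition g0 :: "real \<Rightarrow> nat \<Rightarrow> nat \<Rightarrow> real" where
  "g0 a i j = (let n = i + 1 in if j = i then fact (n - 1) / D n a else 0)"
definition g1 :: "real \<Rightarrow> nat \<Rightarrow> nat \<Rightarrow> real" where
  "g1 a i j = (let n = i + 1; m = j + 1 in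
     if m = n then (if n = 1 then 0 else - 2 * real (n - 1) * fact (n - 1) / D n a)
     else if m = n + 1 then fact n / D n a
     else if n = m + 1 then fact m / D m a
     else 0)"

lemma Theta0_eq: "Theta0 N a = mat N N (\<lambda>(i,j). g0 a i j)"
  unfolding Theta0_def g0_def by simp
lemma P1_eq: "P1 N a = mat N N (\<lambda>(i,j). g1 a i j)"
  unfolding P1_def g1_def by simp


lemma D_nz: "a > 0 \<Longrightarrow> D n a \<noteq> 0" using D_pos[of a n] by simp

definition ff :: "real \<Rightarrow> nat \<Rightarrow> real" where "ff a n = fact (n+1) / (2 * D n a)"
definition dd :: "real \<Rightarrow> nat \<Rightarrow> real" where
  "dd a n = real (n - 1) * fact (n - 1) * (a + 3 * real n - 4) / D n a"
definition ee :: "real \<Rightarrow> nat \<Rightarrow> real" where "ee a n = - (2 * real (n - 1) * fact n / D n a)"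
definition g2 :: "nat \<Rightarrow> real \<Rightarrow> nat \<Rightarrow> nat \<Rightarrow> real" where
  "g2 N a i j = (if i = j then (if i = N - 1 then dd a N - (a + real N) * ff a (N-1) / (a + real N - 1)
     else dd a (i+1)) else if j = i+1 then ee a (i+1) else if i = j+1 then ee a (j+1)
     else if j = i+2 then ff a (i+1) else if i = j+2 then ff a (j+1) else 0)"

lemma g2_c3: assumes "a>0" "i+3<N" shows "MH N a (g2 N a) i (i+3) = MH N a (g2 N a) (i+3) i"
  using assms apply (simp only: numeral_3_eq_3 add_Suc_right add_0_right)
  apply (cases i) apply (simp_all add: MH_0 MH_Suc g2_def)
  apply (simp_all add: ff_def D_SS D_nz divide_simps)
  apply (simp_all add: algebra_simps)
  done
lemma g2_c2: assumes "a>0" "i+2<N" shows "MH N a (g2 N a) i (i+2) = MH N a (g2 N a) (i+2) i"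
  using assms apply (simp only: numeral_2_eq_2 add_Suc_right add_0_right)
  apply (cases i) apply (simp_all add: MH_0 MH_Suc g2_def)
  apply (simp_all add: ff_def ee_def D_SS D_nz divide_simps)
  apply (simp_all add: algebra_simps)
  done
lemma g2_c1a: assumes "a>0" "N = i+3+m" shows "MH N a (g2 N a) i (i+1) = MH N a (g2 N a) (i+1) i"
  using assms apply (simp only: numeral_3_eq_3 add_Suc_right add_0_right add_Suc Suc_eq_plus1[symmetric])
  apply (cases i) apply (simp_all add: MH_0 MH_Suc g2_def)
  apply (simp_all add: ff_def ee_def dd_def D_SS D_nz divide_simps)
  apply (simp_all add: algebra_simps)
  done
lemma g2_c1b: assumes "a>0" "N = i+2" shows "MH N a (g2 N a) i (i+1) = MH N a (g2 N a) (i+1) i"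
  using assms apply (simp only: numeral_2_eq_2 add_Suc_right add_0_right add_Suc Suc_eq_plus1[symmetric])
  apply (cases i) apply (simp_all add: MH_0 MH_Suc g2_def)
  apply (simp_all add: ff_def ee_def dd_def D_SS D_nz divide_simps)
  apply (simp_all add: algebra_simps)
  done

lemma g0_MH: assumes "a>0" "i<N" "j<N" shows "MH N a (g0 a) i j = MH N a (g0 a) j i"
proof (rule MH_cases[OF _ _ _ _ _ assms(2,3)])
  fix i assume "i+1<N"
  then show "MH N a (g0 a) i (i+1) = MH N a (g0 a) (i+1) i" using assms
    by (cases i) (simp_all add: MH_0 MH_Suc g0_def D_SS D_nz divide_simps, (simp_all add: algebra_simps))
qed (auto simp: g0_def MH_def Let_def split: if_splits)

lemma g1_MH: assumes "a>0" "i<N" "j<N" shows "MH N a (g1 a) i j = MH N a (g1 a) j i"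
proof (rule MH_cases[OF _ _ _ _ _ assms(2,3)])
  fix i assume "i+1<N"
  then show "MH N a (g1 a) i (i+1) = MH N a (g1 a) (i+1) i" using assms
    by (cases i) (simp_all add: MH_0 MH_Suc g1_def D_SS D_nz divide_simps, (simp_all add: algebra_simps))
next
  fix i assume "i+2<N"
  then show "MH N a (g1 a) i (i+2) = MH N a (g1 a) (i+2) i" using assms
    apply (simp only: numeral_2_eq_2 add_Suc_right add_0_right)
    by (cases i) (simp_all add: MH_0 MH_Suc g1_def D_SS D_nz divide_simps, (simp_all add: algebra_simps))
qed (auto simp: g1_def MH_def Let_def)

lemma g2_MH: assumes "a>0" "i<N" "j<N" shows "MH N a (g2 N a) i j = MH N a (g2 N a) j i"
proof (rule MH_cases[OF _ _ _ _ _ assms(2,3)])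
  fix i assume "i+1<N"
  then consider "i+2<N" | "N = i+2" by linarith
  then show "MH N a (g2 N a) i (i+1) = MH N a (g2 N a) (i+1) i"
  proof cases
    case 1
    then have "N = i + 3 + (N - (i+3))" by simp
    then show ?thesis by (rule g2_c1a[OF assms(1)])
  next
    case 2
    then show ?thesis by (rule g2_c1b[OF assms(1)])
  qed
qed (use g2_c2[OF assms(1)] g2_c3[OF assms(1)] in \<open>auto simp: g2_def\<close>)


lemma quad_form:
  assumes "v \<in> carrier_vec N"
  shows "v \<bullet> (mat N N (\<lambda>(i,j). h i j) *\<^sub>v v) = (\<Sum>i<N. \<Sum>j<N. v$i * h i j * v$j)"
  using assms by (simp add: scalar_prod_def sum_distrib_left atLeast0LessThan mult.assoc)

lemma abs_prod_le:
  fixes v :: "real vec"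
  assumes "i<N" "j<N"
  shows "\<bar>v$i * v$j\<bar> \<le> (\<Sum>k<N. (v$k)^2)"
proof -
  have "(v$i)^2 \<le> (\<Sum>k<N. (v$k)^2)" using assms by (intro member_le_sum) auto
  moreover have "(v$j)^2 \<le> (\<Sum>k<N. (v$k)^2)" using assms by (intro member_le_sum) auto
  moreover have "2 * \<bar>v$i * v$j\<bar> \<le> (v$i)^2 + (v$j)^2"
  proof -
    have "0 \<le> (\<bar>v$i\<bar> - \<bar>v$j\<bar>)^2" by simp
    then show ?thesis by (simp add: power2_eq_square algebra_simps abs_mult)
  qed
  ultimately show ?thesis by linarith
qed

lemma quad_bound:
  fixes v :: "real vec"
  shows "\<bar>\<Sum>i<N. \<Sum>j<N. v$i * g i j * v$j\<bar> \<le> (\<Sum>i<N. \<Sum>j<N. \<bar>g i j\<bar>) * (\<Sum>k<N. (v$k)^2)"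
proof -
  have "\<bar>\<Sum>i<N. \<Sum>j<N. v$i * g i j * v$j\<bar> \<le> (\<Sum>i<N. \<bar>\<Sum>j<N. v$i * g i j * v$j\<bar>)"
    by (rule sum_abs)
  also have "\<dots> \<le> (\<Sum>i<N. \<Sum>j<N. \<bar>v$i * g i j * v$j\<bar>)"
    by (intro sum_mono sum_abs)
  also have "\<dots> \<le> (\<Sum>i<N. \<Sum>j<N. \<bar>g i j\<bar> * (\<Sum>k<N. (v$k)^2))"
  proof (intro sum_mono)
    fix i j assume "i \<in> {..<N}" "j \<in> {..<N}"
    then have "\<bar>v$i * v$j\<bar> \<le> (\<Sum>k<N. (v$k)^2)" by (intro abs_prod_le) auto
    then have "\<bar>g i j\<bar> * \<bar>v$i * v$j\<bar> \<le> \<bar>g i j\<bar> * (\<Sum>k<N. (v$k)^2)"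
      by (intro mult_left_mono) auto
    then show "\<bar>v$i * g i j * v$j\<bar> \<le> \<bar>g i j\<bar> * (\<Sum>k<N. (v$k)^2)"
      by (simp add: abs_mult algebra_simps)
  qed
  also have "\<dots> = (\<Sum>i<N. \<Sum>j<N. \<bar>g i j\<bar>) * (\<Sum>k<N. (v$k)^2)"
    by (simp add: sum_distrib_right)
  finally show ?thesis .
qed

lemma pd_perturb:
  fixes t :: "nat \<Rightarrow> real" and g0 g h :: "nat \<Rightarrow> nat \<Rightarrow> real"
  assumes N: "N > 0" and tpos: "\<And>i. i<N \<Longrightarrow> t i > 0"
    and g0: "\<And>i j. g0 i j = (if i = j then t i else 0)"
  shows "\<exists>\<epsilon>>0. \<forall>\<alpha> \<beta>. \<bar>\<alpha>\<bar> < \<epsilon> \<and> \<bar>\<beta>\<bar> < \<epsilon> \<longrightarrow> (\<forall>v\<in>carrier_vec N. v \<noteq> 0\<^sub>v N \<longrightarrow>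
     0 < (\<Sum>i<N. \<Sum>j<N. v$i * (g0 i j + \<alpha> * g i j + \<beta> * h i j) * v$j))"
proof -
  define c where "c = Min (t ` {..<N})"
  have cpos: "c > 0" unfolding c_def using N tpos by (subst Min_gr_iff) auto
  have cle: "c \<le> t i" if "i<N" for i unfolding c_def using that by (intro Min_le) auto
  define K1 where "K1 = (\<Sum>i<N. \<Sum>j<N. \<bar>g i j\<bar>)"
  define K2 where "K2 = (\<Sum>i<N. \<Sum>j<N. \<bar>h i j\<bar>)"
  have K1: "K1 \<ge> 0" "K2 \<ge> 0" unfolding K1_def K2_def by (auto intro: sum_nonneg)
  define \<epsilon> where "\<epsilon> = c / (K1 + K2 + 1)"
  have epos: "\<epsilon> > 0" unfolding \<epsilon>_def using cpos K1 by auto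
  have eK: "\<epsilon> * (K1 + K2) < c"
  proof -
    have "\<epsilon> * (K1 + K2 + 1) = c" unfolding \<epsilon>_def using K1 by auto
    then show ?thesis using epos by (simp add: algebra_simps)
  qed
  show ?thesis
  proof (intro exI[of _ \<epsilon>] conjI epos allI impI ballI)
    fix \<alpha> \<beta> :: real and v :: "real vec"
    assume ab: "\<bar>\<alpha>\<bar> < \<epsilon> \<and> \<bar>\<beta>\<bar> < \<epsilon>" and v: "v \<in> carrier_vec N" "v \<noteq> 0\<^sub>v N"
    define S where "S = (\<Sum>k<N. (v$k)^2)"
    obtain i0 where i0: "i0 < N" "v$i0 \<noteq> 0"
      using v by (metis carrier_vecD eq_vecI index_zero_vec(1,2))
    have "(v$i0)^2 \<le> S" unfolding S_def using i0 by (intro member_le_sum) auto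
    moreover have "(v$i0)^2 > 0" using i0 by simp
    ultimately have Spos: "S > 0" by linarith
    have split: "(\<Sum>i<N. \<Sum>j<N. v$i * (g0 i j + \<alpha> * g i j + \<beta> * h i j) * v$j) =
        (\<Sum>i<N. \<Sum>j<N. v$i * g0 i j * v$j) + \<alpha> * (\<Sum>i<N. \<Sum>j<N. v$i * g i j * v$j)
        + \<beta> * (\<Sum>i<N. \<Sum>j<N. v$i * h i j * v$j)"
      by (simp add: sum.distrib sum_distrib_left algebra_simps)
    have d0: "(\<Sum>i<N. \<Sum>j<N. v$i * g0 i j * v$j) = (\<Sum>i<N. t i * (v$i)^2)"
    proof (rule sum.cong[OF refl])
      fix i assume i: "i \<in> {..<N}"
      have "(\<Sum>j<N. v$i * g0 i j * v$j) = (\<Sum>j<N. if j = i then t i * (v$i)^2 else 0)"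
        by (rule sum.cong[OF refl]) (auto simp: g0 power2_eq_square)
      also have "\<dots> = t i * (v$i)^2" using i by (simp add: sum.delta')
      finally show "(\<Sum>j<N. v$i * g0 i j * v$j) = t i * (v$i)^2" .
    qed
    have "(\<Sum>i<N. c * (v$i)^2) \<le> (\<Sum>i<N. t i * (v$i)^2)"
      by (intro sum_mono mult_right_mono cle) auto
    then have d0': "c * S \<le> (\<Sum>i<N. \<Sum>j<N. v$i * g0 i j * v$j)"
      unfolding d0 S_def by (simp add: sum_distrib_left)
    have b1: "\<bar>\<alpha> * (\<Sum>i<N. \<Sum>j<N. v$i * g i j * v$j)\<bar> \<le> \<epsilon> * K1 * S"
    proof -
      have "\<bar>\<alpha> * (\<Sum>i<N. \<Sum>j<N. v$i * g i j * v$j)\<bar> \<le> \<bar>\<alpha>\<bar> * (K1 * S)"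
        unfolding abs_mult K1_def S_def by (intro mult_left_mono quad_bound) auto
      also have "\<dots> \<le> \<epsilon> * (K1 * S)" using ab K1 Spos by (intro mult_right_mono) auto
      finally show ?thesis by simp
    qed
    have b2: "\<bar>\<beta> * (\<Sum>i<N. \<Sum>j<N. v$i * h i j * v$j)\<bar> \<le> \<epsilon> * K2 * S"
    proof -
      have "\<bar>\<beta> * (\<Sum>i<N. \<Sum>j<N. v$i * h i j * v$j)\<bar> \<le> \<bar>\<beta>\<bar> * (K2 * S)"
        unfolding abs_mult K2_def S_def by (intro mult_left_mono quad_bound) auto
      also have "\<dots> \<le> \<epsilon> * (K2 * S)" using ab K1 Spos by (intro mult_right_mono) auto
      finally show ?thesis by simp
    qed
    have "\<epsilon> * (K1 + K2) * S < c * S" using eK Spos by simp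
    then show "0 < (\<Sum>i<N. \<Sum>j<N. v$i * (g0 i j + \<alpha> * g i j + \<beta> * h i j) * v$j)"
      unfolding split using d0' b1 b2 by (simp add: algebra_simps)
  qed
qed

lemma MH_lin: "MH N a (\<lambda>i j. g i j + \<alpha> * g' i j + \<beta> * g'' i j) i j
   = MH N a g i j + \<alpha> * MH N a g' i j + \<beta> * MH N a g'' i j"
  by (simp add: MH_def algebra_simps)

theorem lemma3:
  fixes N :: nat and a :: real
  assumes "N \<ge> 3" and "a > 0"
  shows "\<exists>P2 :: real mat.
     P2 \<in> carrier_mat N N \<and>
     transpose_mat P2 = P2 \<and>
     (\<forall>i < N. \<forall>j < N. (i + 2 < j \<or> j + 2 < i) \<longrightarrow> P2 $$ (i, j) = 0) \<and>
     transpose_mat (Hmat N a) * P2 = P2 * Hmat N a \<and>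
     P2 $$ (0, 0) = 0 \<and> P2 $$ (0, 1) = 0 \<and> P2 $$ (0, 2) = 1 \<and>
     (\<forall>n \<in> {2..N - 1}. P2 $$ (n - 1, n - 1) =
        real (n - 1) * fact (n - 1) * (a + 3 * real n - 4) / D n a) \<and>
     (\<forall>n \<in> {2..N - 1}. P2 $$ (n - 1, n) = - (2 * real (n - 1) * fact n / D n a)) \<and>
     (\<forall>n \<in> {2..N - 2}. P2 $$ (n - 1, n + 1) = fact (n + 1) / (2 * D n a)) \<and>
     (\<forall>\<alpha> \<beta> :: real.
        transpose_mat (Hmat N a) * (Theta0 N a + \<alpha> \<cdot>\<^sub>m P1 N a + \<beta> \<cdot>\<^sub>m P2)
        = (Theta0 N a + \<alpha> \<cdot>\<^sub>m P1 N a + \<beta> \<cdot>\<^sub>m P2) * Hmat N a) \<and>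
     (\<exists>\<epsilon> > 0. \<forall>\<alpha> \<beta> :: real. \<bar>\<alpha>\<bar> < \<epsilon> \<and> \<bar>\<beta>\<bar> < \<epsilon> \<longrightarrow>
        is_metric N (Hmat N a) (Theta0 N a + \<alpha> \<cdot>\<^sub>m P1 N a + \<beta> \<cdot>\<^sub>m P2))"
proof -
  define P2 where "P2 = mat N N (\<lambda>(i,j). g2 N a i j)"
  have g2sym: "\<And>i j. g2 N a i j = g2 N a j i" by (auto simp: g2_def)
  have g1sym: "\<And>i j. g1 a i j = g1 a j i" by (auto simp: g1_def Let_def)
  have g0sym: "\<And>i j. g0 a i j = g0 a j i" by (auto simp: g0_def Let_def)
  have Tm: "Theta0 N a + \<alpha> \<cdot>\<^sub>m P1 N a + \<beta> \<cdot>\<^sub>m P2 =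
      mat N N (\<lambda>(i,j). g0 a i j + \<alpha> * g1 a i j + \<beta> * g2 N a i j)" for \<alpha> \<beta>
    unfolding P2_def Theta0_eq P1_eq by (intro eq_matI) auto
  have inter: "transpose_mat (Hmat N a) * (Theta0 N a + \<alpha> \<cdot>\<^sub>m P1 N a + \<beta> \<cdot>\<^sub>m P2)
        = (Theta0 N a + \<alpha> \<cdot>\<^sub>m P1 N a + \<beta> \<cdot>\<^sub>m P2) * Hmat N a" for \<alpha> \<beta>
    unfolding Tm
  proof (rule intertwine[OF refl])
    show "g0 a i j + \<alpha> * g1 a i j + \<beta> * g2 N a i j = g0 a j i + \<alpha> * g1 a j i + \<beta> * g2 N a j i" for i j
      using g0sym g1sym g2sym by simp
    show "MH N a (\<lambda>i j. g0 a i j + \<alpha> * g1 a i j + \<beta> * g2 N a i j) i j =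
          MH N a (\<lambda>i j. g0 a i j + \<alpha> * g1 a i j + \<beta> * g2 N a i j) j i" if "i<N" "j<N" for i j
      unfolding MH_lin using g0_MH[OF assms(2) that] g1_MH[OF assms(2) that] g2_MH[OF assms(2) that] by simp
  qed
  have P2C: "P2 \<in> carrier_mat N N" unfolding P2_def by simp
  have P2T: "transpose_mat P2 = P2" unfolding P2_def using g2sym by (intro eq_matI) auto
  have band: "\<forall>i < N. \<forall>j < N. (i + 2 < j \<or> j + 2 < i) \<longrightarrow> P2 $$ (i, j) = 0"
    unfolding P2_def by (auto simp: g2_def)
  have P2int: "transpose_mat (Hmat N a) * P2 = P2 * Hmat N a"
    unfolding P2_def by (rule intertwine[OF refl g2sym g2_MH[OF assms(2)]])
  have e00: "P2 $$ (0, 0) = 0" "P2 $$ (0, 1) = 0" "P2 $$ (0, 2) = 1"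
    using assms unfolding P2_def by (auto simp: g2_def dd_def ee_def ff_def)
  have ediag: "\<forall>n \<in> {2..N - 1}. P2 $$ (n - 1, n - 1) =
        real (n - 1) * fact (n - 1) * (a + 3 * real n - 4) / D n a"
  proof
    fix n assume n: "n \<in> {2..N - 1}"
    then have "n - 1 \<noteq> N - 1" "n - 1 + 1 = n" "n - 1 < N" using assms by auto
    then show "P2 $$ (n - 1, n - 1) = real (n - 1) * fact (n - 1) * (a + 3 * real n - 4) / D n a"
      unfolding P2_def by (simp add: g2_def dd_def)
  qed
  have eoff: "\<forall>n \<in> {2..N - 1}. P2 $$ (n - 1, n) = - (2 * real (n - 1) * fact n / D n a)"
  proof
    fix n assume n: "n \<in> {2..N - 1}"
    then have "n - 1 + 1 = n" "n - 1 < N" "n < N" using assms by auto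
    then show "P2 $$ (n - 1, n) = - (2 * real (n - 1) * fact n / D n a)"
      unfolding P2_def by (simp add: g2_def ee_def)
  qed
  have eoff2: "\<forall>n \<in> {2..N - 2}. P2 $$ (n - 1, n + 1) = fact (n + 1) / (2 * D n a)"
  proof
    fix n assume n: "n \<in> {2..N - 2}"
    then have "n - 1 + 2 = n + 1" "n - 1 < N" "n + 1 < N" using assms by auto
    then show "P2 $$ (n - 1, n + 1) = fact (n + 1) / (2 * D n a)"
      unfolding P2_def by (simp add: g2_def ff_def)
  qed
  obtain \<epsilon> where eps: "\<epsilon> > 0" and epsP: "\<forall>\<alpha> \<beta>. \<bar>\<alpha>\<bar> < \<epsilon> \<and> \<bar>\<beta>\<bar> < \<epsilon> \<longrightarrow> (\<forall>v\<in>carrier_vec N. v \<noteq> 0\<^sub>v N \<longrightarrow>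
     0 < (\<Sum>i<N. \<Sum>j<N. v$i * (g0 a i j + \<alpha> * g1 a i j + \<beta> * g2 N a i j) * v$j))"
  proof -
    have N0: "N > 0" using assms by simp
    have tp: "\<And>i. i<N \<Longrightarrow> fact i / D (i+1) a > 0" using D_pos[OF assms(2)] by simp
    have g0e: "\<And>i j. g0 a i j = (if i = j then fact i / D (i+1) a else 0)" by (auto simp: g0_def)
    show ?thesis using pd_perturb[of N "\<lambda>i. fact i / D (i+1) a" "g0 a" "g1 a" "g2 N a", OF N0 tp g0e] that
      by blast
  qed
  have metric: "\<exists>\<epsilon> > 0. \<forall>\<alpha> \<beta> :: real. \<bar>\<alpha>\<bar> < \<epsilon> \<and> \<bar>\<beta>\<bar> < \<epsilon> \<longrightarrow>
        is_metric N (Hmat N a) (Theta0 N a + \<alpha> \<cdot>\<^sub>m P1 N a + \<beta> \<cdot>\<^sub>m P2)"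
  proof (intro exI[of _ \<epsilon>] conjI eps allI impI)
    fix \<alpha> \<beta> :: real assume ab: "\<bar>\<alpha>\<bar> < \<epsilon> \<and> \<bar>\<beta>\<bar> < \<epsilon>"
    show "is_metric N (Hmat N a) (Theta0 N a + \<alpha> \<cdot>\<^sub>m P1 N a + \<beta> \<cdot>\<^sub>m P2)"
      unfolding is_metric_def pos_def_hermitian_def
    proof (intro conjI ballI impI inter)
      show "Theta0 N a + \<alpha> \<cdot>\<^sub>m P1 N a + \<beta> \<cdot>\<^sub>m P2 \<in> carrier_mat N N" unfolding Tm by simp
      show "transpose_mat (Theta0 N a + \<alpha> \<cdot>\<^sub>m P1 N a + \<beta> \<cdot>\<^sub>m P2) = Theta0 N a + \<alpha> \<cdot>\<^sub>m P1 N a + \<beta> \<cdot>\<^sub>m P2"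
        unfolding Tm using g0sym g1sym g2sym by (intro eq_matI) auto
      fix v :: "real vec" assume v: "v \<in> carrier_vec N" "v \<noteq> 0\<^sub>v N"
      show "0 < v \<bullet> ((Theta0 N a + \<alpha> \<cdot>\<^sub>m P1 N a + \<beta> \<cdot>\<^sub>m P2) *\<^sub>v v)"
        unfolding Tm quad_form[OF v(1)] using epsP ab v by blast
    qed
  qed
  show ?thesis
    by (rule exI[of _ P2]) (use P2C P2T band P2int e00 ediag eoff eoff2 inter metric in blast)
qed

end
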